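(* Let $G$ be an abelian group and let $(a_n)_{n\in\omega}$ be a $T$-sequence in $G$ such that $\{a_n:n\in\omega\}$ generates $G$. Then the coarse group $(G,\mathcal{C}_{\tau(a_n)})$ is asymorphic to the Cayley graph $\mathrm{Cay}(G,\{a_n:n\in\omega\})$ endowed with its path metric.
   Context: A sequence $(a_n)$ in an abelian group $G$ is a $T$-sequence if there is a Hausdorff group topology on $G$ in which $(a_n)\to 0$; $\tau(a_n)$ is the strongest group topology on $G$ in which $(a_n)\to0$, and $\mathcal{C}_{\tau(a_n)}$ is the family of precompact subsets of $(G,\tau(a_n))$. A coarse structure on a set $X$ is a family $\mathcal{E}$ of subsets of $X\times X$, each containing the diagonal, closed under composition, inversion, taking subsets containing the diagonal, and such that every pair $(x,y)$ lies in some member. For $E\in\mathcal{E}$, $E[x]=\{y:(x,y)\in E\}$. A group ideal $\mathcal{I}$ on $G$ (a family of subsets containing all finite sets, closed under subsets and under $(A,B)\mapsto A-B$) defines the coarse structure on $G$ with base $\{\{(x,y):x\in A+y\}:A\in\mathcal{I}\}$; $(G,\mathcal{I})$ denotes $G$ with this coarse structure. A metric space is regarded as a coarse space with base of entourages $\{(x,y):d(x,y)\le r\}$, $r\ge0$. For $S\subseteq G$, $\mathrm{Cay}(G,S)$ is the graph with vertex set $G$ and edges $\{(x,y): x-y\in S\cup(-S)\}$. A map $f$ between coarse spaces $(X,\mathcal{E})$, $(X',\mathcal{E}')$ is macro-uniform if for every $E\in\mathcal{E}$ there is $E'\in\mathcal{E}'$ with $f(E[x])\subseteq E'[f(x)]$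 for all $x$; an asymorphism is a bijection $f$ with $f$ and $f^{-1}$ macro-uniform. *)

theory Defs
  imports "HOL-Analysis.Analysis"
begin

definition group_topology :: "'a::ab_group_add topology \<Rightarrow> bool" where
  "group_topology T \<longleftrightarrow> topspace T = UNIV
     \<and> continuous_map (prod_topology T T) T (\<lambda>(x, y). x + y)
     \<and> continuous_map T T uminus"

definition T_sequence :: "(nat \<Rightarrow> 'a::ab_group_add) \<Rightarrow> bool" where
  "T_sequence a \<longleftrightarrow> (\<exists>T. group_topology T \<and> Hausdorff_space T \<and> limitin T a 0 sequentially)"

definition tau_seq :: "(nat \<Rightarrow> 'a::ab_group_add) \<Rightarrow> 'a topology" where
  "tau_seq a = (THE T. group_topology T \<and> limitin T a 0 sequentially
      \<and> (\<forall>T'. group_topology T' \<and> limitin T' a 0 sequentially \<longrightarrow>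
              (\<forall>U. openin T' U \<longrightarrow> openin T U)))"

definition precompact_in :: "'a::ab_group_add topology \<Rightarrow> 'a set \<Rightarrow> bool" where
  "precompact_in T A \<longleftrightarrow> (\<forall>U. openin T U \<and> 0 \<in> U \<longrightarrow>
      (\<exists>F. finite F \<and> A \<subseteq> {f + u | f u. f \<in> F \<and> u \<in> U}))"

definition precompacts :: "'a::ab_group_add topology \<Rightarrow> 'a set set" where
  "precompacts T = {A. precompact_in T A}"

definition ideal_coarse :: "'a::ab_group_add set set \<Rightarrow> ('a \<times> 'a) set set" where
  "ideal_coarse I = {E. Id \<subseteq> E \<and> (\<exists>A\<in>I. E \<subseteq> {(x, y). x \<in> (\<lambda>z. z + y) ` A})}"

definition cay_edge :: "'a::ab_group_add set \<Rightarrow> 'a \<Rightarrow> 'a \<Rightarrow> bool" where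
  "cay_edge S x y \<longleftrightarrow> x - y \<in> S \<union> uminus ` S"

definition cay_dist :: "'a::ab_group_add set \<Rightarrow> 'a \<Rightarrow> 'a \<Rightarrow> nat" where
  "cay_dist S x y = (LEAST n. \<exists>p. length p = Suc n \<and> hd p = x \<and> last p = y
       \<and> (\<forall>i<n. cay_edge S (p ! i) (p ! Suc i)))"

definition metric_coarse :: "('a \<Rightarrow> 'a \<Rightarrow> real) \<Rightarrow> ('a \<times> 'a) set set" where
  "metric_coarse d = {E. Id \<subseteq> E \<and> (\<exists>r\<ge>0. E \<subseteq> {(x, y). d x y \<le> r})}"

definition macro_uniform :: "('a \<times> 'a) set set \<Rightarrow> ('b \<times> 'b) set set \<Rightarrow> ('a \<Rightarrow> 'b) \<Rightarrow> bool" where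
  "macro_uniform \<E> \<E>' f \<longleftrightarrow> (\<forall>E\<in>\<E>. \<exists>E'\<in>\<E>'. \<forall>x. f ` (E `` {x}) \<subseteq> E' `` {f x})"

definition asymorphism :: "('a \<times> 'a) set set \<Rightarrow> ('b \<times> 'b) set set \<Rightarrow> ('a \<Rightarrow> 'b) \<Rightarrow> bool" where
  "asymorphism \<E> \<E>' f \<longleftrightarrow> bij f \<and> macro_uniform \<E> \<E>' f \<and> macro_uniform \<E>' \<E> (inv f)"

definition asymorphic :: "('a \<times> 'a) set set \<Rightarrow> ('b \<times> 'b) set set \<Rightarrow> bool" where
  "asymorphic \<E> \<E>' \<longleftrightarrow> (\<exists>f. asymorphism \<E> \<E>' f)"

definition add_subgroup :: "'a::ab_group_add set \<Rightarrow> bool" where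
  "add_subgroup H \<longleftrightarrow> 0 \<in> H \<and> (\<forall>x\<in>H. \<forall>y\<in>H. x - y \<in> H)"

definition gen_subgroup :: "'a::ab_group_add set \<Rightarrow> 'a set" where
  "gen_subgroup S = \<Inter>{H. add_subgroup H \<and> S \<subseteq> H}"

end

theory Submission
  imports Defs
begin


definition Aset :: "(nat \<Rightarrow> 'a::ab_group_add) \<Rightarrow> nat \<Rightarrow> 'a set" where
  "Aset a m = insert 0 (a ` {m..} \<union> uminus ` a ` {m..})"

fun PP :: "(nat \<Rightarrow> 'a::ab_group_add) \<Rightarrow> (nat \<Rightarrow> nat) \<Rightarrow> nat \<Rightarrow> 'a set" where
  "PP a n 0 = {0}"
| "PP a n (Suc k) = {x + y |x y. x \<in> PP a n k \<and> y \<in> Aset a (n k)}"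

definition UU :: "(nat \<Rightarrow> 'a::ab_group_add) \<Rightarrow> (nat \<Rightarrow> nat) \<Rightarrow> 'a set" where
  "UU a n = (\<Union>k. PP a n k)"

definition BB :: "(nat \<Rightarrow> 'a::ab_group_add) \<Rightarrow> nat \<Rightarrow> 'a set" where
  "BB a k = PP a (\<lambda>_. 0) k"

lemma zero_Aset[simp]: "0 \<in> Aset a m" by (simp add: Aset_def)

lemma Aset_mono: "m \<le> m' \<Longrightarrow> Aset a m' \<subseteq> Aset a m"
  by (auto simp: Aset_def)

lemma Aset_uminus: "y \<in> Aset a m \<Longrightarrow> - y \<in> Aset a m"
  by (auto simp: Aset_def)

lemma PP_SucI: "x \<in> PP a n k \<Longrightarrow> y \<in> Aset a (n k) \<Longrightarrow> x + y \<in> PP a n (Suc k)"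
  by auto

lemma PP_SucI': "z = x + y \<Longrightarrow> x \<in> PP a n k \<Longrightarrow> y \<in> Aset a (n k) \<Longrightarrow> z \<in> PP a n (Suc k)"
  by auto

lemma PP_SucE: "z \<in> PP a n (Suc k) \<Longrightarrow> (\<And>x y. z = x + y \<Longrightarrow> x \<in> PP a n k \<Longrightarrow> y \<in> Aset a (n k) \<Longrightarrow> P) \<Longrightarrow> P"
  by auto

lemma zero_PP[simp]: "0 \<in> PP a n k"
  by (induction k) force+

lemma PP_Suc_mono: "PP a n k \<subseteq> PP a n (Suc k)"
  by (auto, metis add.right_neutral zero_Aset)

lemma PP_mono: "k \<le> l \<Longrightarrow> PP a n k \<subseteq> PP a n l"
  by (induction l rule: dec_induct) (use PP_Suc_mono in blast)+

lemma PP_mono_seq: "(\<And>i. n i \<le> m i) \<Longrightarrow> PP a m k \<subseteq> PP a n k"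
proof (induction k)
  case (Suc k)
  show ?case
  proof
    fix z assume "z \<in> PP a m (Suc k)"
    then obtain x y where "z = x + y" "x \<in> PP a m k" "y \<in> Aset a (m k)" by (rule PP_SucE)
    then show "z \<in> PP a n (Suc k)" using Suc Aset_mono[of "n k" "m k" a] by (intro PP_SucI') auto
  qed
qed simp

lemma PP_cong: "(\<And>i. i < k \<Longrightarrow> n i = m i) \<Longrightarrow> PP a n k = PP a m k"
  by (induction k) auto

lemma PP_uminus: "x \<in> PP a n k \<Longrightarrow> - x \<in> PP a n k"
proof (induction k arbitrary: x)
  case 0 then show ?case by simp
next
  case (Suc k)
  then obtain y z where "x = y + z" "y \<in> PP a n k" "z \<in> Aset a (n k)" by auto
  then have "-y + -z \<in> PP a n (Suc k)" using Suc.IH Aset_uminus PP_SucI by blast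
  then show ?case using \<open>x = y + z\<close> by (simp add: add.commute)
qed

lemma PP_shift_add:
  "y \<in> PP a n k \<Longrightarrow> z \<in> PP a (\<lambda>i. n (k + i)) l \<Longrightarrow> y + z \<in> PP a n (k + l)"
proof (induction l arbitrary: z)
  case 0 then show ?case by simp
next
  case (Suc l)
  then obtain z' s where "z = z' + s" "z' \<in> PP a (\<lambda>i. n (k + i)) l" "s \<in> Aset a (n (k + l))" by auto
  with Suc.IH[of z'] have "(y + z') + s \<in> PP a n (Suc (k + l))" using PP_SucI Suc.prems(1) by blast
  then show ?case using \<open>z = z' + s\<close> by (simp add: add.assoc)
qed

lemma PP_split:
  "u \<in> PP a n (k + l) \<Longrightarrow> \<exists>c t. u = c + t \<and> c \<in> PP a n k \<and> t \<in> PP a (\<lambda>i. n (k + i)) l"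
proof (induction l arbitrary: u)
  case 0 then show ?case by (auto intro!: exI[of _ u])
next
  case (Suc l)
  then obtain u' s where "u = u' + s" "u' \<in> PP a n (k + l)" "s \<in> Aset a (n (k + l))" by auto
  with Suc.IH[of u'] obtain c t where "u' = c + t" "c \<in> PP a n k" "t \<in> PP a (\<lambda>i. n (k + i)) l"
    by auto
  moreover have "t + s \<in> PP a (\<lambda>i. n (k + i)) (Suc l)" using PP_SucI \<open>s \<in> _\<close> \<open>t \<in> _\<close> by fastforce
  ultimately show ?case using \<open>u = u' + s\<close> by (metis add.assoc)
qed

lemma PP_double:
  assumes "x \<in> PP a (\<lambda>i. max (n (2*i)) (n (Suc (2*i)))) k"
      and "y \<in> PP a (\<lambda>i. max (n (2*i)) (n (Suc (2*i)))) k"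
  shows "x + y \<in> PP a n (2*k)"
  using assms
proof (induction k arbitrary: x y)
  case 0 then show ?case by simp
next
  case (Suc k)
  then obtain x' s y' t where xy: "x = x' + s" "y = y' + t"
    "x' \<in> PP a (\<lambda>i. max (n (2*i)) (n (Suc (2*i)))) k"
    "y' \<in> PP a (\<lambda>i. max (n (2*i)) (n (Suc (2*i)))) k"
    "s \<in> Aset a (max (n (2*k)) (n (Suc (2*k))))"
    "t \<in> Aset a (max (n (2*k)) (n (Suc (2*k))))" by auto
  have "x' + y' \<in> PP a n (2*k)" using Suc.IH xy by blast
  moreover have "s \<in> Aset a (n (2*k))" "t \<in> Aset a (n (Suc (2*k)))"
    using subsetD[OF Aset_mono[OF max.cobounded1] xy(5)] subsetD[OF Aset_mono[OF max.cobounded2] xy(6)] by auto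
  ultimately have "(x' + y' + s) + t \<in> PP a n (Suc (Suc (2*k)))"
    by (intro PP_SucI) auto
  moreover have "x + y = (x' + y' + s) + t" using xy by (simp add: ac_simps)
  ultimately show ?case by simp
qed

lemma UU_double: "\<exists>m. \<forall>x\<in>UU a m. \<forall>y\<in>UU a m. x + y \<in> UU a n"
proof (intro exI ballI)
  fix x y assume "x \<in> UU a (\<lambda>i. max (n (2*i)) (n (Suc (2*i))))" "y \<in> UU a (\<lambda>i. max (n (2*i)) (n (Suc (2*i))))"
  then obtain k l where "x \<in> PP a (\<lambda>i. max (n (2*i)) (n (Suc (2*i)))) k"
     "y \<in> PP a (\<lambda>i. max (n (2*i)) (n (Suc (2*i)))) l" by (auto simp: UU_def)
  then have "x \<in> PP a (\<lambda>i. max (n (2*i)) (n (Suc (2*i)))) (max k l)"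
     "y \<in> PP a (\<lambda>i. max (n (2*i)) (n (Suc (2*i)))) (max k l)"
    using subsetD[OF PP_mono[OF max.cobounded1]] subsetD[OF PP_mono[OF max.cobounded2]] by blast+
  then have "x + y \<in> PP a n (2 * max k l)" by (rule PP_double)
  then show "x + y \<in> UU a n" unfolding UU_def by (rule UN_I[OF UNIV_I])
qed

lemma UU_mono_seq: "(\<And>i. n i \<le> m i) \<Longrightarrow> UU a m \<subseteq> UU a n"
proof
  fix x assume "(\<And>i. n i \<le> m i)" "x \<in> UU a m"
  then obtain k where "x \<in> PP a m k" unfolding UU_def by blast
  then have "x \<in> PP a n k" using PP_mono_seq[of n m a k] \<open>(\<And>i. n i \<le> m i)\<close> by blast
  then show "x \<in> UU a n" unfolding UU_def by (rule UN_I[OF UNIV_I])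
qed

lemma zero_UU[simp]: "0 \<in> UU a n" by (auto simp: UU_def)

lemma UU_uminus: "x \<in> UU a n \<Longrightarrow> -x \<in> UU a n"
proof -
  assume "x \<in> UU a n"
  then obtain k where "x \<in> PP a n k" unfolding UU_def by blast
  then have "-x \<in> PP a n k" by (rule PP_uminus)
  then show "-x \<in> UU a n" unfolding UU_def by (rule UN_I[OF UNIV_I])
qed

lemma UU_shift: "y \<in> UU a n \<Longrightarrow> \<exists>m. \<forall>z\<in>UU a m. y + z \<in> UU a n"
proof -
  assume "y \<in> UU a n"
  then obtain k where k: "y \<in> PP a n k" unfolding UU_def by blast
  show ?thesis
  proof (intro exI ballI)
    fix z assume "z \<in> UU a (\<lambda>i. n (k + i))"
    then obtain l where "z \<in> PP a (\<lambda>i. n (k + i)) l" unfolding UU_def by blast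
    then have "y + z \<in> PP a n (k + l)" by (rule PP_shift_add[OF k])
    then show "y + z \<in> UU a n" unfolding UU_def by (rule UN_I[OF UNIV_I])
  qed
qed

lemma PP_tail:
  assumes "\<And>i. 0 \<in> V i" "\<And>i u v. u \<in> V (Suc i) \<Longrightarrow> v \<in> V (Suc i) \<Longrightarrow> u + v \<in> V i"
    "\<And>i. Aset a (m i) \<subseteq> V (Suc i)"
  shows "PP a m l \<subseteq> V 0"
proof -
  have "\<forall>x\<in>PP a m l. \<forall>v\<in>V l. x + v \<in> V 0"
  proof (induction l)
    case 0 then show ?case by simp
  next
    case (Suc l)
    show ?case
    proof (intro ballI)
      fix x v assume "x \<in> PP a m (Suc l)" "v \<in> V (Suc l)"
      then obtain y s where "x = y + s" "y \<in> PP a m l" "s \<in> Aset a (m l)" by auto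
      then have "s \<in> V (Suc l)" using assms(3) by blast
      then have "s + v \<in> V l" using assms(2) \<open>v \<in> _\<close> by blast
      then have "y + (s + v) \<in> V 0" using Suc.IH \<open>y \<in> _\<close> by blast
      then show "x + v \<in> V 0" using \<open>x = _\<close> by (simp add: add.assoc)
    qed
  qed
  show ?thesis
  proof
    fix x assume "x \<in> PP a m l"
    then have "x + 0 \<in> V 0" using \<open>\<forall>x\<in>PP a m l. _\<close> assms(1)[of l] by blast
    then show "x \<in> V 0" by simp
  qed
qed

lemma BB_mono: "k \<le> l \<Longrightarrow> BB a k \<subseteq> BB a l"
  unfolding BB_def by (rule PP_mono)

lemma BB_add: "x \<in> BB a k \<Longrightarrow> y \<in> BB a l \<Longrightarrow> x + y \<in> BB a (k + l)"
  unfolding BB_def using PP_shift_add[of x a "\<lambda>_. 0" k y l] by (simp only:)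

lemma PP_sub_BB: "PP a n k \<subseteq> BB a k"
  unfolding BB_def by (rule PP_mono_seq) simp

lemma BB_Suc: "BB a (Suc k) = {x + y |x y. x \<in> BB a k \<and> y \<in> insert 0 (range a \<union> uminus ` range a)}"
  unfolding BB_def PP.simps Aset_def by (simp only: atLeast_0)




section \<open>General group topology facts\<close>

lemma gt_top: "group_topology T \<Longrightarrow> topspace T = UNIV"
  by (simp add: group_topology_def)

lemma gt_add: "group_topology T \<Longrightarrow> continuous_map (prod_topology T T) T (\<lambda>(x, y). x + y)"
  by (simp add: group_topology_def)

lemma gt_neg: "group_topology T \<Longrightarrow> continuous_map T T uminus"
  by (simp add: group_topology_def)

lemma gt_transl: "group_topology T \<Longrightarrow> continuous_map T T (\<lambda>z. c + z)"
proof -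
  assume g: "group_topology T"
  have "continuous_map T (prod_topology T T) (\<lambda>z. (c, z))"
    by (intro continuous_map_pairedI) (auto simp: g gt_top)
  from continuous_map_compose[OF this gt_add[OF g]] show ?thesis by (simp add: o_def)
qed

lemma gt_open_pre:
  "continuous_map T T f \<Longrightarrow> group_topology T \<Longrightarrow> openin T Ob \<Longrightarrow> openin T (f -` Ob)"
  using openin_continuous_map_preimage[of T T f Ob] by (simp add: gt_top vimage_def)

lemma gt_half:
  assumes g: "group_topology T" and Ob: "openin T Ob" "0 \<in> Ob"
  shows "\<exists>W. openin T W \<and> 0 \<in> W \<and> (\<forall>u\<in>W. \<forall>v\<in>W. u + v \<in> Ob)"
proof -
  have "openin (prod_topology T T) {p \<in> topspace (prod_topology T T). (\<lambda>(x, y). x + y) p \<in> Ob}"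
    using openin_continuous_map_preimage[OF gt_add[OF g] Ob(1)] .
  then have "openin (prod_topology T T) {p. fst p + snd p \<in> Ob}"
    by (simp add: gt_top[OF g] case_prod_beta)
  then have H: "\<forall>x y. (x,y) \<in> {p. fst p + snd p \<in> Ob} \<longrightarrow> (\<exists>U V. openin T U \<and> openin T V \<and> x \<in> U \<and> y \<in> V \<and> U \<times> V \<subseteq> {p. fst p + snd p \<in> Ob})"
    unfolding openin_prod_topology_alt .
  have "(0,0) \<in> {p. fst p + snd p \<in> Ob}" using Ob(2) by simp
  from H[rule_format, OF this]
  obtain U V where "openin T U" "openin T V" "0 \<in> U" "0 \<in> V" "U \<times> V \<subseteq> {p. fst p + snd p \<in> Ob}"
    by blast
  then show ?thesis by (intro exI[of _ "U \<inter> V"]) auto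
qed

lemma gt_Aset:
  assumes g: "group_topology T" and l: "limitin T a 0 sequentially" and W: "openin T W" "0 \<in> W"
  shows "\<exists>m. Aset a m \<subseteq> W"
proof -
  have lim: "\<forall>U. openin T U \<and> 0 \<in> U \<longrightarrow> (\<exists>N. \<forall>n\<ge>N. a n \<in> U)"
    using l unfolding limitin_sequentially by (rule conjunct2)
  have o1: "openin T (W \<inter> uminus -` W)" by (rule openin_Int[OF W(1) gt_open_pre[OF gt_neg[OF g] g W(1)]])
  have o2: "0 \<in> W \<inter> uminus -` W" using W by simp
  have "\<exists>N. \<forall>n\<ge>N. a n \<in> W \<inter> uminus -` W" by (rule lim[rule_format, OF conjI[OF o1 o2]])
  then obtain N where "\<forall>n\<ge>N. a n \<in> W \<inter> uminus -` W" by blast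
  then show ?thesis using W(2) by (intro exI[of _ N]) (auto simp: Aset_def)
qed

lemma gt_small_UU:
  assumes g: "group_topology T" and l: "limitin T a 0 sequentially" and Ob: "openin T Ob" "0 \<in> Ob"
  shows "\<exists>n. UU a n \<subseteq> Ob"
proof -
  define V where "V = rec_nat Ob (\<lambda>i W. SOME W'. openin T W' \<and> 0 \<in> W' \<and> (\<forall>u\<in>W'. \<forall>v\<in>W'. u + v \<in> W))"
  have V0: "V 0 = Ob" by (simp add: V_def)
  have VS: "V (Suc i) = (SOME W'. openin T W' \<and> 0 \<in> W' \<and> (\<forall>u\<in>W'. \<forall>v\<in>W'. u + v \<in> V i))" for i
    by (simp add: V_def)
  have Vo1: "openin T (V i) \<and> 0 \<in> V i" for i
  proof (induction i)
    case 0
    then show ?case using Ob V0 by simp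
  next
    case (Suc i)
    then show ?case using someI_ex[OF gt_half[OF g, of "V i"]] unfolding VS[of i] by blast
  qed
  have Vo2: "\<forall>u\<in>V (Suc i). \<forall>v\<in>V (Suc i). u + v \<in> V i" for i
    using someI_ex[OF gt_half[OF g, of "V i"]] Vo1[of i] unfolding VS[of i] by blast
  have Vo: "openin T (V i) \<and> 0 \<in> V i \<and> (\<forall>u\<in>V (Suc i). \<forall>v\<in>V (Suc i). u + v \<in> V i)" for i
    using Vo1 Vo2 by blast
  define n where "n i = (SOME m. Aset a m \<subseteq> V (Suc i))" for i
  have "Aset a (n i) \<subseteq> V (Suc i)" for i
    unfolding n_def using someI_ex[OF gt_Aset[OF g l, of "V (Suc i)"]] Vo by blast
  then have "PP a n k \<subseteq> V 0" for k
    by (intro PP_tail) (use Vo in auto)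
  then show ?thesis unfolding UU_def V0 by blast
qed

section \<open>The topology TU\<close>

definition TU :: "(nat \<Rightarrow> 'a::ab_group_add) \<Rightarrow> 'a topology" where
  "TU a = topology (\<lambda>Ob. \<forall>x\<in>Ob. \<exists>n. (\<lambda>u. x + u) ` UU a n \<subseteq> Ob)"

lemma istop_TU: "istopology (\<lambda>Ob. \<forall>x\<in>Ob. \<exists>n. (\<lambda>u. x + u) ` UU a n \<subseteq> (Ob::'a::ab_group_add set))"
  unfolding istopology_def
proof (intro conjI allI impI ballI)
  fix S T :: "'a set" and x
  assume S: "\<forall>x\<in>S. \<exists>n. (+) x ` UU a n \<subseteq> S" and T: "\<forall>x\<in>T. \<exists>n. (+) x ` UU a n \<subseteq> T" and x: "x \<in> S \<inter> T"
  from x have "x \<in> S" "x \<in> T" by auto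
  then obtain n1 n2 where "(+) x ` UU a n1 \<subseteq> S" "(+) x ` UU a n2 \<subseteq> T" using S T by meson
  moreover have "UU a (\<lambda>i. max (n1 i) (n2 i)) \<subseteq> UU a n1" by (rule UU_mono_seq) simp
  moreover have "UU a (\<lambda>i. max (n1 i) (n2 i)) \<subseteq> UU a n2" by (rule UU_mono_seq) simp
  ultimately have "(+) x ` UU a (\<lambda>i. max (n1 i) (n2 i)) \<subseteq> S \<inter> T" by (meson image_mono le_inf_iff order_trans)
  then show "\<exists>n. (+) x ` UU a n \<subseteq> S \<inter> T" by (rule exI[of _ "\<lambda>i. max (n1 i) (n2 i)"])
next
  fix K :: "'a set set" and x
  assume "\<forall>K\<in>K. \<forall>x\<in>K. \<exists>n. (+) x ` UU a n \<subseteq> K" "x \<in> \<Union>K"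
  then obtain k where "k \<in> K" "x \<in> k" by blast
  then obtain n where "(+) x ` UU a n \<subseteq> k" using \<open>\<forall>K\<in>K. _\<close> by meson
  then have "(+) x ` UU a n \<subseteq> \<Union>K" using \<open>k \<in> K\<close> by (meson Union_upper order_trans)
  then show "\<exists>n. (+) x ` UU a n \<subseteq> \<Union>K" by (rule exI[of _ n])
qed

lemma openin_TU: "openin (TU a) Ob \<longleftrightarrow> (\<forall>x\<in>Ob. \<exists>n. (\<lambda>u. x + u) ` UU a n \<subseteq> Ob)"
  unfolding TU_def topology_inverse'[OF istop_TU] by (rule refl)

lemma topspace_TU: "topspace (TU a) = UNIV"
proof -
  have "openin (TU a) UNIV" by (simp add: openin_TU)
  then have "UNIV \<subseteq> topspace (TU a)" by (rule openin_subset)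
  then show ?thesis by (rule top_le)
qed

lemma open_transl_UU: "openin (TU a) ((\<lambda>u. c + u) ` UU a n)"
  unfolding openin_TU
proof
  fix x assume "x \<in> (+) c ` UU a n"
  then obtain y where y: "x = c + y" "y \<in> UU a n" by blast
  from UU_shift[OF y(2)] obtain m where m: "\<forall>z\<in>UU a m. y + z \<in> UU a n" by blast
  have "(+) x ` UU a m \<subseteq> (+) c ` UU a n"
  proof
    fix w assume "w \<in> (+) x ` UU a m"
    then obtain z where "w = x + z" "z \<in> UU a m" by blast
    then have "w = c + (y + z)" "y + z \<in> UU a n" using y m by (simp_all add: add.assoc)
    then show "w \<in> (+) c ` UU a n" by blast
  qed
  then show "\<exists>m. (+) x ` UU a m \<subseteq> (+) c ` UU a n" by (rule exI[of _ m])
qed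

lemma group_topology_TU: "group_topology (TU a)"
  unfolding group_topology_def
proof (intro conjI)
  show "topspace (TU a) = UNIV" by (rule topspace_TU)
  show "continuous_map (TU a) (TU a) uminus"
    unfolding continuous_map_def topspace_TU
  proof (intro conjI allI impI)
    fix Ob assume "openin (TU a) Ob"
    then show "openin (TU a) {x \<in> UNIV. - x \<in> Ob}"
      unfolding openin_TU
    proof (intro ballI)
      fix x assume H: "\<forall>x\<in>Ob. \<exists>n. (+) x ` UU a n \<subseteq> Ob" "x \<in> {x \<in> UNIV. - x \<in> Ob}"
      then obtain n where "(+) (-x) ` UU a n \<subseteq> Ob" by auto
      then show "\<exists>n. (+) x ` UU a n \<subseteq> {x \<in> UNIV. - x \<in> Ob}"
      proof (intro exI[of _ n] subsetI)
        fix z assume "z \<in> (+) x ` UU a n"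
        then obtain u where "z = x + u" "u \<in> UU a n" by blast
        then have "-x + -u \<in> Ob" using \<open>(+) (-x) ` UU a n \<subseteq> Ob\<close> UU_uminus by blast
        then show "z \<in> {x \<in> UNIV. - x \<in> Ob}" using \<open>z = x + u\<close> by (simp add: add.commute)
      qed
    qed
  qed simp
  show "continuous_map (prod_topology (TU a) (TU a)) (TU a) (\<lambda>(x, y). x + y)"
    unfolding continuous_map_def topspace_TU topspace_prod_topology
  proof (intro conjI allI impI)
    fix Ob assume "openin (TU a) Ob"
    then show "openin (prod_topology (TU a) (TU a)) {x \<in> UNIV \<times> UNIV. (case x of (x, y) \<Rightarrow> x + y) \<in> Ob}"
      unfolding openin_prod_topology_alt
    proof (intro allI impI)
      fix x y assume Ob: "openin (TU a) Ob" and xy: "(x, y) \<in> {x \<in> UNIV \<times> UNIV. (case x of (x, y) \<Rightarrow> x + y) \<in> Ob}"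
      then obtain n where n: "(+) (x + y) ` UU a n \<subseteq> Ob" unfolding openin_TU by auto
      obtain m where m: "\<forall>u\<in>UU a m. \<forall>v\<in>UU a m. u + v \<in> UU a n" using UU_double by blast
      have "(+) x ` UU a m \<times> (+) y ` UU a m \<subseteq> {x \<in> UNIV \<times> UNIV. (case x of (x, y) \<Rightarrow> x + y) \<in> Ob}"
      proof clarsimp
        fix u v assume "u \<in> UU a m" "v \<in> UU a m"
        then have "(x + y) + (u + v) \<in> Ob" using m n by blast
        then show "x + u + (y + v) \<in> Ob" by (simp add: algebra_simps)
      qed
      moreover have "x \<in> (+) x ` UU a m" "y \<in> (+) y ` UU a m"
        by (rule image_eqI[of _ _ 0], simp, simp)+
      ultimately show "\<exists>U V. openin (TU a) U \<and> openin (TU a) V \<and> x \<in> U \<and> y \<in> V \<and>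
          U \<times> V \<subseteq> {x \<in> UNIV \<times> UNIV. (case x of (x, y) \<Rightarrow> x + y) \<in> Ob}"
        using open_transl_UU[of a x m] open_transl_UU[of a y m] by blast
    qed
  qed simp
qed

lemma limit_TU: "limitin (TU a) a 0 sequentially"
  unfolding limitin_sequentially topspace_TU
proof (intro conjI allI impI)
  fix Ob assume "openin (TU a) Ob \<and> 0 \<in> Ob"
  then obtain n where n: "(+) 0 ` UU a n \<subseteq> Ob" unfolding openin_TU by blast
  have "a m \<in> UU a n" if "n 0 \<le> m" for m
  proof -
    have "a m \<in> Aset a (n 0)" using that by (auto simp: Aset_def)
    then have "0 + a m \<in> PP a n (Suc 0)" by (rule PP_SucI[OF zero_PP])
    then have "a m \<in> PP a n (Suc 0)" by (simp only: add_0_left)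
    then show ?thesis unfolding UU_def by (rule UN_I[OF UNIV_I])
  qed
  then show "\<exists>N. \<forall>m\<ge>N. a m \<in> Ob" using n by force
qed simp

lemma finest_TU:
  assumes "group_topology T" "limitin T a 0 sequentially" "openin T Ob"
  shows "openin (TU a) Ob"
  unfolding openin_TU
proof
  fix x assume "x \<in> Ob"
  have "openin T ((\<lambda>z. x + z) -` Ob)" by (rule gt_open_pre[OF gt_transl]) (use assms in auto)
  moreover have "0 \<in> (\<lambda>z. x + z) -` Ob" using \<open>x \<in> Ob\<close> by simp
  ultimately obtain n where "UU a n \<subseteq> (\<lambda>z. x + z) -` Ob" using gt_small_UU assms by blast
  then show "\<exists>n. (+) x ` UU a n \<subseteq> Ob" by blast
qed

lemma tau_seq_TU: "tau_seq a = TU a"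
  unfolding tau_seq_def
proof (rule the_equality)
  show "group_topology (TU a) \<and> limitin (TU a) a 0 sequentially \<and>
    (\<forall>T'. group_topology T' \<and> limitin T' a 0 sequentially \<longrightarrow> (\<forall>U. openin T' U \<longrightarrow> openin (TU a) U))"
    using group_topology_TU limit_TU finest_TU by blast
next
  fix T assume H: "group_topology T \<and> limitin T a 0 sequentially \<and>
    (\<forall>T'. group_topology T' \<and> limitin T' a 0 sequentially \<longrightarrow> (\<forall>U. openin T' U \<longrightarrow> openin T U))"
  show "T = TU a"
    unfolding topology_eq using H group_topology_TU limit_TU finest_TU by blast
qed




section \<open>Cayley distance\<close>

definition pathlen :: "'a::ab_group_add set \<Rightarrow> 'a \<Rightarrow> 'a \<Rightarrow> nat \<Rightarrow> bool" where
  "pathlen S x y n \<longleftrightarrow> (\<exists>p. length p = Suc n \<and> hd p = x \<and> last p = y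
       \<and> (\<forall>i<n. cay_edge S (p ! i) (p ! Suc i)))"

lemma cay_dist_pathlen: "cay_dist S x y = (LEAST n. pathlen S x y n)"
  unfolding cay_dist_def pathlen_def by (rule refl)

lemma BB_zero: "BB a 0 = {0}" by (simp add: BB_def)

lemma Aset0: "Aset a 0 = insert 0 (range a \<union> uminus ` range a)"
  unfolding Aset_def by (simp only: atLeast_0)

lemma BB_path: "x - y \<in> BB a k \<Longrightarrow> \<exists>n\<le>k. pathlen (range a) x y n"
proof (induction k arbitrary: x)
  case 0
  then have "x = y" by (simp add: BB_zero)
  then have "pathlen (range a) x y 0" unfolding pathlen_def by (intro exI[of _ "[x]"]) simp
  then show ?case by blast
next
  case (Suc k)
  from Suc.prems have "x - y \<in> PP a (\<lambda>_. 0) (Suc k)" unfolding BB_def .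
  then obtain z s where zs: "x - y = z + s" "z \<in> PP a (\<lambda>_. 0) k" "s \<in> Aset a 0"
    by (rule PP_SucE)
  have zs2: "z \<in> BB a k" unfolding BB_def by (rule zs(2))
  show ?case
  proof (cases "s = 0")
    case True
    then have "x - y \<in> BB a k" using zs zs2 by simp
    then obtain n where "n \<le> k" "pathlen (range a) x y n" using Suc.IH by blast
    then show ?thesis by (intro exI[of _ n]) simp
  next
    case False
    then have sS: "s \<in> range a \<union> uminus ` range a" using zs(3) unfolding Aset0 by blast
    have "(x - s) - y = z" using zs by (simp add: algebra_simps)
    then have "(x - s) - y \<in> BB a k" using zs2 by simp
    then obtain n p where n: "n \<le> k" "length p = Suc n" "hd p = x - s" "last p = y"
        "\<forall>i<n. cay_edge (range a) (p ! i) (p ! Suc i)"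
      using Suc.IH unfolding pathlen_def by blast
    have pne: "p \<noteq> []" using n(2) by auto
    have "pathlen (range a) x y (Suc n)"
      unfolding pathlen_def
    proof (intro exI[of _ "x # p"] conjI allI impI)
      show "length (x # p) = Suc (Suc n)" using n by simp
      show "hd (x # p) = x" by simp
      show "last (x # p) = y" using n pne by simp
      fix i assume "i < Suc n"
      show "cay_edge (range a) ((x # p) ! i) ((x # p) ! Suc i)"
      proof (cases i)
        case 0
        have "p ! 0 = x - s" using n(3) pne by (simp add: hd_conv_nth)
        then show ?thesis using 0 sS by (simp add: cay_edge_def)
      next
        case (Suc j)
        then show ?thesis using n(5) \<open>i < Suc n\<close> by simp
      qed
    qed
    then show ?thesis using n(1) by (intro exI[of _ "Suc n"]) simp
  qed
qed

lemma path_BB: "pathlen (range a) x y n \<Longrightarrow> x - y \<in> BB a n"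
proof (induction n arbitrary: x)
  case 0
  then obtain p where p: "length p = Suc 0" "hd p = x" "last p = y" unfolding pathlen_def by blast
  then have "x = y" by (cases p) auto
  then show ?case by (simp add: BB_zero)
next
  case (Suc n)
  then obtain p where p: "length p = Suc (Suc n)" "hd p = x" "last p = y"
     "\<forall>i<Suc n. cay_edge (range a) (p ! i) (p ! Suc i)" unfolding pathlen_def by blast
  then obtain r where r: "p = x # r" by (cases p) auto
  have rne: "r \<noteq> []" using p r by auto
  have "pathlen (range a) (hd r) y n"
    unfolding pathlen_def
  proof (intro exI[of _ r] conjI allI impI)
    show "length r = Suc n" using p r by simp
    show "hd r = hd r" by simp
    show "last r = y" using p r rne by simp
    fix i assume "i < n"
    then show "cay_edge (range a) (r ! i) (r ! Suc i)" using p(4)[rule_format, of "Suc i"] r by simp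
  qed
  then have "hd r - y \<in> BB a n" by (rule Suc.IH)
  moreover have "x - hd r \<in> Aset a 0"
    using p(4)[rule_format, of 0] r rne unfolding Aset0 cay_edge_def by (simp add: hd_conv_nth)
  moreover have "x - y = (hd r - y) + (x - hd r)" by simp
  ultimately show ?case unfolding BB_def by (rule PP_SucI'[rotated, unfolded BB_def])
qed

lemma gen_BB:
  assumes "gen_subgroup (range a) = UNIV"
  shows "\<exists>k. z \<in> BB a k"
proof -
  define H where "H = (\<Union>k. BB a k)"
  have "add_subgroup H"
    unfolding add_subgroup_def
  proof (intro conjI ballI)
    have "0 \<in> BB a 0" by (simp add: BB_zero)
    then show "0 \<in> H" unfolding H_def by (rule UN_I[OF UNIV_I])
    fix x y assume "x \<in> H" "y \<in> H"
    then obtain j k where "x \<in> BB a j" "y \<in> BB a k" unfolding H_def by blast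
    moreover have "- y \<in> BB a k" using \<open>y \<in> BB a k\<close> unfolding BB_def by (rule PP_uminus)
    ultimately have "x + - y \<in> BB a (j + k)" by (intro BB_add)
    then have "x - y \<in> BB a (j + k)" by simp
    then show "x - y \<in> H" unfolding H_def by (rule UN_I[OF UNIV_I])
  qed
  moreover have "range a \<subseteq> H"
  proof
    fix z assume "z \<in> range a"
    then have "z \<in> Aset a 0" unfolding Aset0 by blast
    then have "0 + z \<in> BB a (Suc 0)" unfolding BB_def by (intro PP_SucI zero_PP)
    then have "z \<in> BB a (Suc 0)" by simp
    then show "z \<in> H" unfolding H_def by (rule UN_I[OF UNIV_I])
  qed
  ultimately have "H \<in> {H. add_subgroup H \<and> range a \<subseteq> H}" by blast
  then have "gen_subgroup (range a) \<subseteq> H" unfolding gen_subgroup_def by (rule Inter_lower)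
  then have "z \<in> H" using assms by blast
  then show ?thesis unfolding H_def by blast
qed

lemma cay_le: "x - y \<in> BB a k \<Longrightarrow> cay_dist (range a) x y \<le> k"
proof -
  assume "x - y \<in> BB a k"
  then obtain n where "n \<le> k" "pathlen (range a) x y n" using BB_path by blast
  then show ?thesis unfolding cay_dist_pathlen by (meson Least_le order_trans)
qed

lemma cay_BB:
  assumes "gen_subgroup (range a) = UNIV"
  shows "x - y \<in> BB a (cay_dist (range a) x y)"
proof -
  obtain k where "x - y \<in> BB a k" using gen_BB[OF assms] by blast
  then obtain n where "pathlen (range a) x y n" using BB_path by blast
  then have "pathlen (range a) x y (cay_dist (range a) x y)" unfolding cay_dist_pathlen by (rule LeastI)
  then show ?thesis by (rule path_BB)
qed

lemma BB_cover: "\<exists>F. finite F \<and> BB a k \<subseteq> {f + u |f u. f \<in> F \<and> u \<in> PP a n k}"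
proof (induction k)
  case 0
  show ?case by (intro exI[of _ "{0}"]) (simp add: BB_zero)
next
  case (Suc k)
  then obtain F where F: "finite F" "BB a k \<subseteq> {f + u |f u. f \<in> F \<and> u \<in> PP a n k}" by blast
  define C where "C = insert 0 (a ` {..<n k} \<union> uminus ` a ` {..<n k})"
  define F' where "F' = (\<lambda>(f, c). f + c) ` (F \<times> C)"
  have "finite C" unfolding C_def by simp
  then have fin: "finite F'" unfolding F'_def using F(1) by simp
  have AC: "Aset a 0 \<subseteq> Aset a (n k) \<union> C"
  proof
    fix s assume "s \<in> Aset a 0"
    then consider "s = 0" | m where "s = a m" | m where "s = - a m" unfolding Aset0 by blast
    then show "s \<in> Aset a (n k) \<union> C"
    proof cases
      case 1 then show ?thesis by simp
    next
      case (2 m) then show ?thesis unfolding C_def Aset_def by (cases "m < n k") auto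
    next
      case (3 m) then show ?thesis unfolding C_def Aset_def by (cases "m < n k") auto
    qed
  qed
  have "BB a (Suc k) \<subseteq> {f + u |f u. f \<in> F' \<and> u \<in> PP a n (Suc k)}"
  proof
    fix z assume "z \<in> BB a (Suc k)"
    then have "z \<in> PP a (\<lambda>_. 0) (Suc k)" unfolding BB_def .
    then obtain w s where ws: "z = w + s" "w \<in> PP a (\<lambda>_. 0) k" "s \<in> Aset a 0" by (rule PP_SucE)
    have "w \<in> BB a k" unfolding BB_def by (rule ws(2))
    then obtain f p where fp: "w = f + p" "f \<in> F" "p \<in> PP a n k" using F(2) by blast
    from ws(3) AC have "s \<in> Aset a (n k) \<or> s \<in> C" by blast
    then show "z \<in> {f + u |f u. f \<in> F' \<and> u \<in> PP a n (Suc k)}"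
    proof
      assume "s \<in> Aset a (n k)"
      then have "p + s \<in> PP a n (Suc k)" using fp by (intro PP_SucI)
      moreover have "f + 0 \<in> F'" unfolding F'_def C_def using fp by force
      moreover have "z = (f + 0) + (p + s)" using ws fp by (simp add: ac_simps)
      ultimately show ?thesis by blast
    next
      assume "s \<in> C"
      then have "f + s \<in> F'" unfolding F'_def using fp by force
      moreover have "p + 0 \<in> PP a n (Suc k)" using fp by (intro PP_SucI) auto
      moreover have "z = (f + s) + (p + 0)" using ws fp by (simp add: ac_simps)
      ultimately show ?thesis by blast
    qed
  qed
  then show ?case using fin by blast
qed

lemma BB_precompact: "precompact_in (TU a) (BB a R)"
  unfolding precompact_in_def
proof (intro allI impI)
  fix U assume "openin (TU a) U \<and> 0 \<in> U"
  then obtain n where n: "(+) 0 ` UU a n \<subseteq> U" unfolding openin_TU by blast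
  then have nU: "UU a n \<subseteq> U" by simp
  obtain F where F: "finite F" "BB a R \<subseteq> {f + u |f u. f \<in> F \<and> u \<in> PP a n R}" using BB_cover by blast
  have "PP a n R \<subseteq> U" using nU unfolding UU_def by blast
  then have "BB a R \<subseteq> {f + u |f u. f \<in> F \<and> u \<in> U}" using F(2) by blast
  then show "\<exists>F. finite F \<and> BB a R \<subseteq> {f + u |f u. f \<in> F \<and> u \<in> U}" using F(1) by blast
qed




section \<open>Compactness in a group topology\<close>

lemma compact_Aset:
  assumes g: "group_topology T" and l: "limitin T a 0 sequentially"
  shows "compactin T (Aset a m)"
proof -
  have eq: "a ` {m..} = range (\<lambda>i. a (i + m))"
  proof -
    have "{m..} = (\<lambda>i. i + m) ` UNIV"
    proof
      show "{m..} \<subseteq> range (\<lambda>i. i + m)"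
      proof
        fix x assume "x \<in> {m..}"
        then have "x = (x - m) + m" by simp
        then show "x \<in> range (\<lambda>i. i + m)" by (rule range_eqI)
      qed
    qed auto
    then show ?thesis by (simp add: image_image)
  qed
  have c1: "compactin T (insert 0 (range (\<lambda>i. a (i + m))))"
    by (rule compactin_sequence_with_limit[OF limitin_sequentially_offset[OF l]]) (auto simp: gt_top[OF g])
  have c2: "compactin T (uminus ` insert 0 (range (\<lambda>i. a (i + m))))"
    by (rule image_compactin[OF c1 gt_neg[OF g]])
  have "Aset a m = insert 0 (range (\<lambda>i. a (i + m))) \<union> uminus ` insert 0 (range (\<lambda>i. a (i + m)))"
    unfolding Aset_def eq by auto
  then show ?thesis using compactin_Un[OF c1 c2] by simp
qed

lemma compact_sum:
  assumes g: "group_topology T" and K1: "compactin T K1" and K2: "compactin T K2"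
  shows "compactin T {x + y |x y. x \<in> K1 \<and> y \<in> K2}"
proof -
  have "compactin (prod_topology T T) (K1 \<times> K2)" using K1 K2 by (simp add: compactin_Times)
  then have "compactin T ((\<lambda>(x, y). x + y) ` (K1 \<times> K2))" by (rule image_compactin[OF _ gt_add[OF g]])
  moreover have "(\<lambda>(x, y). x + y) ` (K1 \<times> K2) = {x + y |x y. x \<in> K1 \<and> y \<in> K2}" by auto
  ultimately show ?thesis by simp
qed

lemma compact_PP:
  assumes g: "group_topology T" and l: "limitin T a 0 sequentially"
  shows "compactin T (PP a n k)"
proof (induction k)
  case 0 then show ?case by (simp add: gt_top[OF g])
next
  case (Suc k)
  have "compactin T {x + y |x y. x \<in> PP a n k \<and> y \<in> Aset a (n k)}"
    by (rule compact_sum[OF g Suc compact_Aset[OF g l]])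
  then show ?case by (simp only: PP.simps)
qed

section \<open>The diagonal step\<close>

definition Kset :: "(nat \<Rightarrow> 'a::ab_group_add) \<Rightarrow> nat \<Rightarrow> (nat \<Rightarrow> nat) \<Rightarrow> 'a set" where
  "Kset a k nf = {b + c |b c. b \<in> BB a k \<and> c \<in> PP a nf k}"

definition Good :: "'a::ab_group_add topology \<Rightarrow> (nat \<Rightarrow> 'a) \<Rightarrow> 'a set \<Rightarrow> nat \<Rightarrow> (nat \<Rightarrow> nat) \<Rightarrow> 'a set \<Rightarrow> nat \<Rightarrow> 'a set \<Rightarrow> bool" where
  "Good T a A k nf Wp m W' \<longleftrightarrow> openin T W' \<and> 0 \<in> W' \<and> Aset a m \<subseteq> W' \<and>
     (\<exists>x\<in>A. \<forall>w\<in>W'. \<forall>w'\<in>W'. w + w' \<in> Wp \<and> x - (w + w') \<notin> Kset a k nf)"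

lemma step_exists:
  assumes g: "group_topology T" and H: "Hausdorff_space T" and l: "limitin T a 0 sequentially"
    and Wp: "openin T Wp" "0 \<in> Wp" and nb: "\<forall>j. \<not> A \<subseteq> BB a j"
  shows "\<exists>m W'. Good T a A k nf Wp m W'"
proof -
  let ?K = "Kset a k nf"
  have KB: "?K \<subseteq> BB a (k + k)"
  proof
    fix z assume "z \<in> ?K"
    then obtain b c where "z = b + c" "b \<in> BB a k" "c \<in> PP a nf k" unfolding Kset_def by blast
    moreover have "c \<in> BB a k" using PP_sub_BB \<open>c \<in> PP a nf k\<close> by blast
    ultimately show "z \<in> BB a (k + k)" using BB_add by blast
  qed
  obtain x where x: "x \<in> A" "x \<notin> BB a (k + k)" using nb by blast
  then have xK: "x \<notin> ?K" using KB by blast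
  have "compactin T ?K" unfolding Kset_def BB_def by (intro compact_sum compact_PP g l)
  then have "closedin T ?K" by (rule compactin_imp_closedin[OF H])
  then have oK: "openin T (UNIV - ?K)" unfolding closedin_def gt_top[OF g] by blast
  have cm: "continuous_map T T ((\<lambda>z. x + z) \<circ> uminus)"
    by (rule continuous_map_compose[OF gt_neg[OF g] gt_transl[OF g]])
  have oO: "openin T (((\<lambda>z. x + z) \<circ> uminus) -` (UNIV - ?K))" by (rule gt_open_pre[OF cm g oK])
  define Q where "Q = ((\<lambda>z. x + z) \<circ> uminus) -` (UNIV - ?K) \<inter> Wp"
  have oQ: "openin T Q" unfolding Q_def by (rule openin_Int[OF oO Wp(1)])
  have "0 \<in> Q" unfolding Q_def using xK Wp(2) by simp
  then obtain W' where W': "openin T W'" "0 \<in> W'" "\<forall>u\<in>W'. \<forall>v\<in>W'. u + v \<in> Q"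
    using gt_half[OF g oQ] by blast
  obtain m where m: "Aset a m \<subseteq> W'" using gt_Aset[OF g l W'(1,2)] by blast
  have "\<forall>w\<in>W'. \<forall>w'\<in>W'. w + w' \<in> Wp \<and> x - (w + w') \<notin> ?K"
  proof (intro ballI)
    fix w w' assume "w \<in> W'" "w' \<in> W'"
    then have "w + w' \<in> Q" using W'(3) by blast
    then have "x + (- w - w') \<notin> ?K \<and> w + w' \<in> Wp" unfolding Q_def by simp
    moreover have "x - (w + w') = x + (- w - w')" by (simp add: algebra_simps)
    ultimately show "w + w' \<in> Wp \<and> x - (w + w') \<notin> ?K" by (simp only:) simp
  qed
  then have "Good T a A k nf Wp m W'" unfolding Good_def using W' m x(1) by blast
  then show ?thesis by blast
qed

lemma finite_in_BB:
  assumes gen: "gen_subgroup (range a) = UNIV" and "finite F"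
  shows "\<exists>j. F \<subseteq> BB a j"
  using assms(2)
proof (induction F rule: finite_induct)
  case empty then show ?case by simp
next
  case (insert f F)
  then obtain j where j: "F \<subseteq> BB a j" by blast
  obtain k where k: "f \<in> BB a k" using gen_BB[OF gen] by blast
  have "F \<subseteq> BB a (max j k)" using j BB_mono[of j "max j k" a] by simp
  moreover have "f \<in> BB a (max j k)" using k BB_mono[of k "max j k" a] by auto
  ultimately show ?case by blast
qed

lemma precompact_bounded:
  assumes ts: "T_sequence a" and gen: "gen_subgroup (range a) = UNIV"
    and pc: "precompact_in (TU a) A"
  shows "\<exists>R. A \<subseteq> BB a R"
proof (rule ccontr)
  assume "\<not> (\<exists>R. A \<subseteq> BB a R)"
  then have nb: "\<forall>j. \<not> A \<subseteq> BB a j" by blast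
  obtain T where g: "group_topology T" and H: "Hausdorff_space T" and l: "limitin T a 0 sequentially"
    using ts unfolding T_sequence_def by blast
  have "\<forall>t. \<exists>r. (openin T (snd (snd t)) \<and> 0 \<in> snd (snd t)) \<longrightarrow>
           Good T a A (fst t) (fst (snd t)) (snd (snd t)) (fst r) (snd r)"
  proof
    fix t :: "nat \<times> (nat \<Rightarrow> nat) \<times> 'a set"
    show "\<exists>r. (openin T (snd (snd t)) \<and> 0 \<in> snd (snd t)) \<longrightarrow>
           Good T a A (fst t) (fst (snd t)) (snd (snd t)) (fst r) (snd r)"
    proof (cases "openin T (snd (snd t)) \<and> 0 \<in> snd (snd t)")
      case True
      then obtain m W' where "Good T a A (fst t) (fst (snd t)) (snd (snd t)) m W'"
        using step_exists[OF g H l _ _ nb] by blast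
      then show ?thesis by (intro exI[of _ "(m, W')"]) simp
    next
      case False then show ?thesis by blast
    qed
  qed
  then obtain G where G: "\<And>t. openin T (snd (snd t)) \<and> 0 \<in> snd (snd t) \<Longrightarrow>
           Good T a A (fst t) (fst (snd t)) (snd (snd t)) (fst (G t)) (snd (G t))"
    by (metis choice)
  define seq where "seq = rec_nat ((\<lambda>_. 0::nat), (UNIV::'a set))
      (\<lambda>k s. ((fst s)(k := fst (G (k, fst s, snd s))), snd (G (k, fst s, snd s))))"
  have seq0: "seq 0 = ((\<lambda>_. 0), UNIV)" by (simp add: seq_def)
  have seqS: "seq (Suc k) = ((fst (seq k))(k := fst (G (k, fst (seq k), snd (seq k)))),
      snd (G (k, fst (seq k), snd (seq k))))" for k
    by (simp add: seq_def)
  have inv: "openin T (snd (seq k)) \<and> 0 \<in> snd (seq k)" for k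
  proof (induction k)
    case 0 then show ?case using openin_topspace[of T] by (simp add: seq0 gt_top[OF g])
  next
    case (Suc k)
    from G[of "(k, fst (seq k), snd (seq k))"] have "Good T a A k (fst (seq k)) (snd (seq k))
        (fst (G (k, fst (seq k), snd (seq k)))) (snd (G (k, fst (seq k), snd (seq k))))"
      using Suc by simp
    then show ?case unfolding seqS Good_def by simp
  qed
  have good: "Good T a A k (fst (seq k)) (snd (seq k))
        (fst (G (k, fst (seq k), snd (seq k)))) (snd (G (k, fst (seq k), snd (seq k))))" for k
    using G[of "(k, fst (seq k), snd (seq k))"] inv[of k] by simp
  define n where "n i = fst (seq (Suc i)) i" for i
  define W where "W i = snd (seq (Suc i))" for i
  have nG: "n k = fst (G (k, fst (seq k), snd (seq k)))" for k unfolding n_def seqS by simp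
  have WG: "W k = snd (G (k, fst (seq k), snd (seq k)))" for k unfolding W_def seqS by simp
  have agree: "i < j \<Longrightarrow> fst (seq j) i = n i" for i j
  proof (induction j)
    case 0 then show ?case by simp
  next
    case (Suc j)
    show ?case
    proof (cases "i = j")
      case True then show ?thesis unfolding n_def by simp
    next
      case False
      then have "i < j" using Suc.prems by simp
      then show ?thesis using Suc.IH False unfolding seqS by simp
    qed
  qed
  have PPn: "PP a (fst (seq k)) k = PP a n k" for k by (rule PP_cong) (rule agree)
  have goodn: "Good T a A k n (snd (seq k)) (n k) (W k)" for k
    using good[of k] unfolding Good_def Kset_def PPn nG[symmetric] WG[symmetric] .
  have Wprev: "snd (seq (Suc k)) = W k" for k unfolding W_def by simp
  have Wopen: "openin T (W k)" "0 \<in> W k" "Aset a (n k) \<subseteq> W k" for k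
    using goodn[of k] unfolding Good_def by blast+
  have Wchain: "\<forall>u\<in>W (Suc k). \<forall>v\<in>W (Suc k). u + v \<in> W k" for k
    using goodn[of "Suc k"] unfolding Good_def Wprev by blast
  obtain xs where xs: "\<And>k. xs k \<in> A"
      "\<And>k. \<forall>w\<in>W k. \<forall>w'\<in>W k. xs k - (w + w') \<notin> Kset a k n"
  proof -
    have "\<forall>k. \<exists>x\<in>A. \<forall>w\<in>W k. \<forall>w'\<in>W k. x - (w + w') \<notin> Kset a k n"
      using goodn unfolding Good_def by blast
    then obtain f where "\<forall>k. f k \<in> A \<and> (\<forall>w\<in>W k. \<forall>w'\<in>W k. f k - (w + w') \<notin> Kset a k n)"
      by metis
    then show ?thesis using that by blast
  qed
  have avoid: "xs k \<notin> {b + u |b u. b \<in> BB a k \<and> u \<in> UU a n}" for k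
  proof
    assume "xs k \<in> {b + u |b u. b \<in> BB a k \<and> u \<in> UU a n}"
    then obtain b u l where bu: "xs k = b + u" "b \<in> BB a k" "u \<in> PP a n l" unfolding UU_def by blast
    show False
    proof (cases "l \<le> k")
      case True
      then have "u \<in> PP a n k" using PP_mono bu(3) by blast
      then have "xs k \<in> Kset a k n" unfolding Kset_def using bu by blast
      moreover have "xs k - (0 + 0) \<notin> Kset a k n" using xs(2)[of k] Wopen(2)[of k] by blast
      ultimately show False by simp
    next
      case False
      then obtain l' where "l = k + l'" by (metis le_add_diff_inverse nat_le_linear)
      then obtain c t where ct: "u = c + t" "c \<in> PP a n k" "t \<in> PP a (\<lambda>i. n (k + i)) l'"
        using PP_split bu(3) by blast
      define V where "V i = (case i of 0 \<Rightarrow> {w + w' |w w'. w \<in> W k \<and> w' \<in> W k} | Suc j \<Rightarrow> W (k + j))" for i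
      have "PP a (\<lambda>i. n (k + i)) l' \<subseteq> V 0"
      proof (rule PP_tail)
        fix i show "0 \<in> V i"
        proof (cases i)
          case 0 then show ?thesis unfolding V_def using Wopen(2)[of k] by force
        next
          case (Suc j) then show ?thesis unfolding V_def using Wopen(2) by simp
        qed
      next
        fix i u v assume uv: "u \<in> V (Suc i)" "v \<in> V (Suc i)"
        show "u + v \<in> V i"
        proof (cases i)
          case 0 then show ?thesis using uv unfolding V_def by auto
        next
          case (Suc j)
          then have "u \<in> W (Suc (k + j))" "v \<in> W (Suc (k + j))" using uv unfolding V_def by simp_all
          then have "u + v \<in> W (k + j)" using Wchain by blast
          then show ?thesis using Suc unfolding V_def by simp
        qed
      next
        fix i show "Aset a (n (k + i)) \<subseteq> V (Suc i)" unfolding V_def using Wopen(3) by simp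
      qed
      then obtain w w' where ww: "t = w + w'" "w \<in> W k" "w' \<in> W k" using ct(3) unfolding V_def by auto
      have "xs k - (w + w') = b + c" using bu(1) ct(1) ww(1) by (simp add: algebra_simps)
      then have "xs k - (w + w') \<in> Kset a k n" unfolding Kset_def using bu(2) ct(2) by blast
      then show False using xs(2)[of k] ww by blast
    qed
  qed
  have "openin (TU a) ((+) 0 ` UU a n)" by (rule open_transl_UU)
  then have "openin (TU a) (UU a n) \<and> 0 \<in> UU a n" by simp
  then obtain F where F: "finite F" "A \<subseteq> {f + u |f u. f \<in> F \<and> u \<in> UU a n}"
    using pc unfolding precompact_in_def by blast
  obtain j where j: "F \<subseteq> BB a j" using finite_in_BB[OF gen F(1)] by blast
  have "xs j \<in> {b + u |b u. b \<in> BB a j \<and> u \<in> UU a n}" using F(2) xs(1)[of j] j by blast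
  then show False using avoid by blast
qed


lemma nat_floor_le: "real n \<le> r \<Longrightarrow> n \<le> nat \<lfloor>r\<rfloor>"
  by (metis floor_mono floor_of_nat nat_int nat_mono)

theorem theorem2:
  fixes a :: "nat \<Rightarrow> 'a::ab_group_add"
  assumes "T_sequence a"
    and "gen_subgroup (range a) = UNIV"
  shows "asymorphic (ideal_coarse (precompacts (tau_seq a)))
           (metric_coarse (\<lambda>x y. real (cay_dist (range a) x y)))"
proof -
  note ts = assms(1) and gen = assms(2)
  let ?d = "\<lambda>x y. real (cay_dist (range a) x y)"
  have d0: "cay_dist (range a) x x = 0" for x
    using cay_le[of x x a 0] by (simp add: BB_zero)
  have m1: "macro_uniform (ideal_coarse (precompacts (TU a))) (metric_coarse ?d) id"
    unfolding macro_uniform_def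
  proof
    fix E assume "E \<in> ideal_coarse (precompacts (TU a))"
    then obtain A where A: "precompact_in (TU a) A" "E \<subseteq> {(x, y). x \<in> (\<lambda>z. z + y) ` A}"
      unfolding ideal_coarse_def precompacts_def by blast
    obtain R where R: "A \<subseteq> BB a R" using precompact_bounded[OF ts gen A(1)] by blast
    define E' where "E' = {(x, y). ?d x y \<le> real R}"
    have "E' \<in> metric_coarse ?d"
      unfolding metric_coarse_def E'_def using d0 by (auto intro!: exI[of _ "real R"])
    moreover have "id ` (E `` {x}) \<subseteq> E' `` {id x}" for x
    proof
      fix y assume "y \<in> id ` (E `` {x})"
      then have "(x, y) \<in> E" by simp
      then obtain z where "z \<in> A" "x = z + y" using A(2) by blast
      then have "x - y \<in> BB a R" using R by auto
      then have "cay_dist (range a) x y \<le> R" by (rule cay_le)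
      then show "y \<in> E' `` {id x}" unfolding E'_def by simp
    qed
    ultimately show "\<exists>E'\<in>metric_coarse ?d. \<forall>x. id ` (E `` {x}) \<subseteq> E' `` {id x}" by blast
  qed
  have m2: "macro_uniform (metric_coarse ?d) (ideal_coarse (precompacts (TU a))) id"
    unfolding macro_uniform_def
  proof
    fix E assume "E \<in> metric_coarse ?d"
    then obtain r where r: "E \<subseteq> {(x, y). ?d x y \<le> r}" unfolding metric_coarse_def by blast
    define R where "R = nat \<lfloor>r\<rfloor>"
    define E' where "E' = {(x, y). x \<in> (\<lambda>z. z + y) ` BB a R}"
    have IdE: "Id \<subseteq> E'" unfolding E'_def
    proof
      fix p :: "'a \<times> 'a" assume "p \<in> Id"
      then obtain x :: 'a where "p = (x, x)" by blast
      moreover have "x = 0 + x" by simp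
      moreover have "(0::'a) \<in> BB a R" unfolding BB_def by simp
      ultimately show "p \<in> {(x, y). x \<in> (\<lambda>z. z + y) ` BB a R}" by blast
    qed
    have "BB a R \<in> precompacts (TU a)" unfolding precompacts_def using BB_precompact by blast
    then have "E' \<in> ideal_coarse (precompacts (TU a))"
      unfolding ideal_coarse_def using IdE unfolding E'_def by blast
    moreover have "id ` (E `` {x}) \<subseteq> E' `` {id x}" for x
    proof
      fix y assume "y \<in> id ` (E `` {x})"
      then have "(x, y) \<in> E" by simp
      then have "real (cay_dist (range a) x y) \<le> r" using r by blast
      then have "cay_dist (range a) x y \<le> R" unfolding R_def by (rule nat_floor_le)
      then have "x - y \<in> BB a R" using cay_BB[OF gen, of x y] BB_mono by blast
      moreover have "x = (x - y) + y" by simp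
      ultimately have "x \<in> (\<lambda>z. z + y) ` BB a R" by (rule image_eqI[rotated])
      then show "y \<in> E' `` {id x}" unfolding E'_def by simp
    qed
    ultimately show "\<exists>E'\<in>ideal_coarse (precompacts (TU a)). \<forall>x. id ` (E `` {x}) \<subseteq> E' `` {id x}" by blast
  qed
  have "asymorphism (ideal_coarse (precompacts (TU a))) (metric_coarse ?d) id"
    unfolding asymorphism_def using m1 m2 by (simp add: inv_id)
  then show ?thesis unfolding asymorphic_def tau_seq_TU by blast
qed


end
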